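(* Let $U$ be in class $\mathcal{K}^{+}$ on $[y_1,y_2]$ and $\beta\in(\min U'',\max U'')$. If $\alpha>0$ and $\phi$ is a solution of $-\phi''+\alpha^2\phi-\frac{\beta-U''}{U-c}\phi=0$ on $(y_1,y_2)$, $\phi(y_1)=\phi(y_2)=0$, with $c=c_r+ic_i$, $c_i>0$, then $$\int_{y_1}^{y_2}(|\phi'|^2+\alpha^2|\phi|^2)\,dy\le\int_{y_1}^{y_2}K_\beta|\phi|^2\,dy,$$ $$\int_{y_1}^{y_2}(|\phi''|^2+2\alpha^2|\phi'|^2+\alpha^4|\phi|^2)\,dy\le\|K_\beta\|_{L^\infty}\int_{y_1}^{y_2}K_\beta|\phi|^2\,dy.$$
   Context: Class $\mathcal{K}^+$: $U\in C^{3}([y_1,y_2])$ is not constant, and for each $\beta\in\mathrm{Ran}(U'')$ there exists $U_\beta\in\mathrm{Ran}(U)$ such that $K_\beta(y)=\frac{\beta-U''(y)}{U(y)-U_\beta}$ is positive and bounded on $[y_1,y_2]$. *)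

theory Defs
  imports "HOL-Analysis.Analysis"
begin

definition C3_on :: "real \<Rightarrow> real \<Rightarrow> (real \<Rightarrow> real) \<Rightarrow> (real \<Rightarrow> real) \<Rightarrow> (real \<Rightarrow> real)
    \<Rightarrow> (real \<Rightarrow> real) \<Rightarrow> bool" where
  "C3_on y1 y2 U U1 U2 U3 \<longleftrightarrow>
     (\<forall>y\<in>{y1..y2}. (U has_real_derivative U1 y) (at y within {y1..y2})
                 \<and> (U1 has_real_derivative U2 y) (at y within {y1..y2})
                 \<and> (U2 has_real_derivative U3 y) (at y within {y1..y2}))
     \<and> continuous_on {y1..y2} U3"

text \<open>K_beta is positive and bounded on [y1,y2] with K_beta (U - U_beta) = beta - U''
  (i.e. K_beta = (beta - U'')/(U - U_beta), extended to the zeros of U - U_beta).\<close>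
definition is_K :: "real \<Rightarrow> real \<Rightarrow> (real \<Rightarrow> real) \<Rightarrow> (real \<Rightarrow> real) \<Rightarrow> real \<Rightarrow> real
    \<Rightarrow> (real \<Rightarrow> real) \<Rightarrow> bool" where
  "is_K y1 y2 U U2 \<beta> U\<beta> K \<longleftrightarrow>
     (\<forall>y\<in>{y1..y2}. K y > 0 \<and> K y * (U y - U\<beta>) = \<beta> - U2 y)
     \<and> bounded (K ` {y1..y2})"

definition class_Kplus :: "real \<Rightarrow> real \<Rightarrow> (real \<Rightarrow> real) \<Rightarrow> (real \<Rightarrow> real) \<Rightarrow> (real \<Rightarrow> real)
    \<Rightarrow> (real \<Rightarrow> real) \<Rightarrow> bool" where
  "class_Kplus y1 y2 U U1 U2 U3 \<longleftrightarrow>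
     C3_on y1 y2 U U1 U2 U3
     \<and> \<not> (\<exists>a. \<forall>y\<in>{y1..y2}. U y = a)
     \<and> (\<forall>\<beta>\<in>U2 ` {y1..y2}. \<exists>U\<beta>\<in>U ` {y1..y2}. \<exists>K. is_K y1 y2 U U2 \<beta> U\<beta> K)"

end

theory Submission
  imports Defs
begin

lemma integrable_off_finite:
  fixes F G :: "real \<Rightarrow> real"
  assumes Z: "finite Z" and FG: "\<And>y. y \<in> {a..b} - Z \<Longrightarrow> F y = G y"
    and G: "continuous_on ({a..b} - Z) G"
    and bd: "\<And>y. y \<in> {a..b} \<Longrightarrow> \<bar>F y\<bar> \<le> C"
  shows "F integrable_on {a..b}"
proof -
  let ?S = "{a..b} - Z"
  have S: "?S \<in> sets lebesgue"
    by (meson Z finite_imp_null_set_lborel fmeasurableD lmeasurable_interval(1)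
    null_setsD2 sets.Diff sets_completionI_sets)
  have "G \<in> borel_measurable (lebesgue_on ?S)"
    by (rule continuous_imp_measurable_on_sets_lebesgue[OF G S])
  moreover have "F \<in> borel_measurable (lebesgue_on ?S) \<longleftrightarrow> G \<in> borel_measurable (lebesgue_on ?S)"
    by (rule measurable_cong) (use FG S in auto)
  ultimately have Fm: "F \<in> borel_measurable (lebesgue_on ?S)" by simp
  have c1: "(\<lambda>_. C) integrable_on {a..b}" by (rule integrable_continuous_interval) (rule continuous_on_const)
  have c2: "(\<lambda>_. C) integrable_on ?S"
    by (rule integrable_spike_set[OF c1]) (auto intro: negligible_subset[OF negligible_finite[OF Z]])
  have "F integrable_on ?S"
    by (rule measurable_bounded_by_integrable_imp_integrable_real[OF Fm c2 _ S]) (use bd in auto)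
  then show ?thesis
    by (rule integrable_spike_set) (auto intro: negligible_subset[OF negligible_finite[OF Z]])
qed

lemma deriv_zero_limpt:
  fixes f :: "real \<Rightarrow> real"
  assumes d: "(f has_real_derivative D) (at p within S)"
    and lp: "p islimpt {z\<in>S. f z = f p}"
  shows "D = 0"
proof -
  let ?T = "{z\<in>S. f z = f p}"
  have "((\<lambda>y. (f y - f p) / (y - p)) \<longlongrightarrow> D) (at p within S)"
    using d by (simp add: has_field_derivative_iff)
  then have t1: "((\<lambda>y. (f y - f p) / (y - p)) \<longlongrightarrow> D) (at p within ?T)"
    by (rule tendsto_within_subset) auto
  have "eventually (\<lambda>y. (f y - f p) / (y - p) = 0) (at p within ?T)"
    by (auto simp: eventually_at_filter)
  then have t2: "((\<lambda>y. (f y - f p) / (y - p)) \<longlongrightarrow> 0) (at p within ?T)"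
    by (rule tendsto_eventually)
  have "at p within ?T \<noteq> bot" using lp by (simp add: trivial_limit_within)
  from tendsto_unique[OF this t1 t2] show ?thesis .
qed

lemma energy_zero:
  fixes f fa fb :: "real \<Rightarrow> real"
  assumes d1: "\<And>y. y \<in> {a..b} \<Longrightarrow> (f has_real_derivative fa y) (at y within {a..b})"
    and d2: "\<And>y. y \<in> {a..b} \<Longrightarrow> (fa has_real_derivative fb y) (at y within {a..b})"
    and bd: "\<And>y. y \<in> {a..b} \<Longrightarrow> \<bar>fb y\<bar> \<le> M * \<bar>f y\<bar>"
    and M: "M \<ge> 0"
    and p: "p \<in> {a..b}" and f0: "f p = 0" and f10: "fa p = 0"
    and y: "y \<in> {a..b}"
  shows "f y = 0"
proof -
  define C where "C = 1 + M"
  define E where "E t = (f t)^2 + (fa t)^2" for t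
  define E' where "E' t = 2 * f t * fa t + 2 * fa t * fb t" for t
  have dE: "(E has_real_derivative E' t) (at t within {a..b})" if "t \<in> {a..b}" for t
    unfolding E_def E'_def
    by (rule derivative_eq_intros d1[OF that] d2[OF that] refl)+ (simp add: algebra_simps)
  have Ebd: "\<bar>E' t\<bar> \<le> C * E t" if "t \<in> {a..b}" for t
  proof -
    have "\<bar>E' t\<bar> \<le> 2 * \<bar>f t\<bar> * \<bar>fa t\<bar> + 2 * \<bar>fa t\<bar> * \<bar>fb t\<bar>"
      unfolding E'_def by (simp add: abs_mult abs_triangle_ineq order_trans[OF abs_triangle_ineq])
    also have "\<dots> \<le> 2 * \<bar>f t\<bar> * \<bar>fa t\<bar> + 2 * \<bar>fa t\<bar> * (M * \<bar>f t\<bar>)"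
      using bd[OF that] by (simp add: mult_left_mono)
    also have "\<dots> = (1 + M) * (2 * \<bar>f t\<bar> * \<bar>fa t\<bar>)" by (simp add: algebra_simps)
    also have "\<dots> \<le> (1 + M) * E t"
    proof (rule mult_left_mono)
      have "0 \<le> (\<bar>f t\<bar> - \<bar>fa t\<bar>)^2" by simp
      then show "2 * \<bar>f t\<bar> * \<bar>fa t\<bar> \<le> E t" unfolding E_def by (simp add: power2_eq_square algebra_simps)
    qed (use M in simp)
    finally show ?thesis by (simp add: C_def)
  qed
  have Enn: "E t \<ge> 0" for t unfolding E_def by simp
  have Ep: "E p = 0" unfolding E_def using f0 f10 by simp
  have contE: "continuous_on {a..b} E"
    using dE by (meson DERIV_continuous continuous_on_eq_continuous_within)
  have "E y = 0"
  proof (cases "p \<le> y")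
    case True
    define G where "G t = - (E t * exp (- C * t))" for t
    have "G p \<le> G y"
    proof (rule DERIV_nonneg_imp_increasing_open[OF True])
      fix x assume x: "p < x" "x < y"
      then have xab: "x \<in> {a..b}" "a < x" "x < b" using p y by auto
      have "(G has_real_derivative - (E' x * exp (- C * x) + E x * (exp (- C * x) * (- C)))) (at x)"
        unfolding G_def using dE[OF xab(1)] at_within_Icc_at[OF xab(2,3)]
        by (auto intro!: derivative_eq_intros)
      moreover have "0 \<le> - (E' x * exp (- C * x) + E x * (exp (- C * x) * (- C)))"
      proof -
        have "E' x \<le> C * E x" using Ebd[OF xab(1)] by linarith
        then have "E' x * exp (- C * x) \<le> C * E x * exp (- C * x)" by simp
        then show ?thesis by (simp add: algebra_simps)
      qed
      ultimately show "\<exists>d. (G has_real_derivative d) (at x) \<and> 0 \<le> d" by blast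
    next
      have "{p..y} \<subseteq> {a..b}" using p y by auto
      then show "continuous_on {p..y} G" unfolding G_def
        by (auto intro!: continuous_intros continuous_on_subset[OF contE])
    qed
    then have "E y * exp (- C * y) \<le> 0" using Ep unfolding G_def by simp
    then show ?thesis using Enn[of y] by (simp add: mult_le_0_iff)
  next
    case False
    then have yp: "y \<le> p" by simp
    define G where "G t = E t * exp (C * t)" for t
    have "G y \<le> G p"
    proof (rule DERIV_nonneg_imp_increasing_open[OF yp])
      fix x assume x: "y < x" "x < p"
      then have xab: "x \<in> {a..b}" "a < x" "x < b" using p y by auto
      have "(G has_real_derivative (E' x * exp (C * x) + E x * (exp (C * x) * C))) (at x)"
        unfolding G_def using dE[OF xab(1)] at_within_Icc_at[OF xab(2,3)]
        by (auto intro!: derivative_eq_intros)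
      moreover have "0 \<le> (E' x * exp (C * x) + E x * (exp (C * x) * C))"
      proof -
        have "- E' x \<le> C * E x" using Ebd[OF xab(1)] by linarith
        then have "- E' x * exp (C * x) \<le> C * E x * exp (C * x)" by (rule mult_right_mono) simp
        then show ?thesis by (simp add: algebra_simps)
      qed
      ultimately show "\<exists>d. (G has_real_derivative d) (at x) \<and> 0 \<le> d" by blast
    next
      have "{y..p} \<subseteq> {a..b}" using p y by auto
      then show "continuous_on {y..p} G" unfolding G_def
        by (auto intro!: continuous_intros continuous_on_subset[OF contE])
    qed
    then have "E y * exp (C * y) \<le> 0" using Ep unfolding G_def by simp
    then show ?thesis using Enn[of y] by (simp add: mult_le_0_iff)
  qed
  then show ?thesis unfolding E_def by (simp add: add_nonneg_eq_0_iff)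
qed

lemma aux1:
  fixes k a u ub rc ci d :: real
  assumes dd: "d = (u - rc)^2 + ci^2" and d0: "d \<noteq> 0"
  shows "k*a = (k*(u-ub))*(u-rc)/d*a + ((rc-ub)^2+ci^2)*(k*(a/d)) - (rc-ub)*((k*(u-ub))*a/d)"
proof -
  have "(k*(u-ub))*(u-rc)/d*a + ((rc-ub)^2+ci^2)*(k*(a/d)) - (rc-ub)*((k*(u-ub))*a/d)
      = (k*a/d) * ((u-ub)*(u-rc) + ((rc-ub)^2+ci^2) - (rc-ub)*(u-ub))"
    using d0 by (simp add: field_simps)
  also have "(u-ub)*(u-rc) + ((rc-ub)^2+ci^2) - (rc-ub)*(u-ub) = d"
    unfolding dd by (simp add: power2_eq_square algebra_simps)
  finally show ?thesis using d0 by simp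
qed
lemma aux2:
  fixes k a u ub rc ci d :: real
  assumes dd: "d = (u - rc)^2 + ci^2" and d0: "d \<noteq> 0"
  shows "k*a = (k*(u-ub))*(u-ub)*a/d + ((rc-ub)^2+ci^2)*(k*(a/d)) - 2*(rc-ub)*((k*(u-ub))*a/d)"
proof -
  have "(k*(u-ub))*(u-ub)*a/d + ((rc-ub)^2+ci^2)*(k*(a/d)) - 2*(rc-ub)*((k*(u-ub))*a/d)
      = (k*a/d) * ((u-ub)*(u-ub) + ((rc-ub)^2+ci^2) - 2*(rc-ub)*(u-ub))"
    using d0 by (simp add: field_simps)
  also have "(u-ub)*(u-ub) + ((rc-ub)^2+ci^2) - 2*(rc-ub)*(u-ub) = d"
    unfolding dd by (simp add: power2_eq_square algebra_simps)
  finally show ?thesis using d0 by simp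
qed
lemma aux3:
  fixes h u rc ci d :: real
  assumes dd: "d = (u - rc)^2 + ci^2" and d0: "d \<noteq> 0"
  shows "(h*(u-rc)/d)^2 + (h*ci/d)^2 = h^2/d"
proof -
  have "(h*(u-rc)/d)^2 + (h*ci/d)^2 = h^2/d * (((u-rc)^2 + ci^2)/d)"
    using d0 by (simp add: field_simps power2_eq_square)
  then show ?thesis using d0 dd by simp
qed

lemma aux4:
  fixes X Y H a A Dn :: real
  assumes "X^2 + Y^2 = H"
  shows "((a^2 - X)^2 + Y^2) * A + 2 * a^2 * Dn + a^4 * A = H * A + 2 * a^2 * (Dn + a^2 * A - X * A)"
proof -
  have "a^4 = a^2 * a^2" by (simp add: power2_eq_square power4_eq_xxxx)
  then show ?thesis unfolding assms[symmetric] by (simp add: power2_eq_square algebra_simps)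
qed

theorem lemma2p4:
  fixes y1 y2 \<alpha> \<beta> U\<beta> :: real
    and U U1 U2 U3 K :: "real \<Rightarrow> real"
    and \<phi> d\<phi> dd\<phi> :: "real \<Rightarrow> complex"
    and c :: complex
  assumes y12: "y1 < y2"
    and UK: "class_Kplus y1 y2 U U1 U2 U3"
    and \<beta>_lo: "(INF y\<in>{y1..y2}. U2 y) < \<beta>"
    and \<beta>_hi: "\<beta> < (SUP y\<in>{y1..y2}. U2 y)"
    and U\<beta>: "U\<beta> \<in> U ` {y1..y2}"
    and K: "is_K y1 y2 U U2 \<beta> U\<beta> K"
    and \<alpha>: "\<alpha> > 0"
    and ci: "Im c > 0"
    and \<phi>_cont: "continuous_on {y1..y2} \<phi>"
    and d\<phi>: "\<And>y. y \<in> {y1<..<y2} \<Longrightarrow> (\<phi> has_vector_derivative d\<phi> y) (at y)"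
    and dd\<phi>: "\<And>y. y \<in> {y1<..<y2} \<Longrightarrow> (d\<phi> has_vector_derivative dd\<phi> y) (at y)"
    and eq: "\<And>y. y \<in> {y1<..<y2} \<Longrightarrow>
               - dd\<phi> y + complex_of_real (\<alpha>^2) * \<phi> y
               - (complex_of_real (\<beta> - U2 y) / (complex_of_real (U y) - c)) * \<phi> y = 0"
    and bc: "\<phi> y1 = 0" "\<phi> y2 = 0"
  shows "(integral {y1..y2} (\<lambda>y. (cmod (d\<phi> y))^2 + \<alpha>^2 * (cmod (\<phi> y))^2)
           \<le> integral {y1..y2} (\<lambda>y. K y * (cmod (\<phi> y))^2))
       \<and> (integral {y1..y2} (\<lambda>y. (cmod (dd\<phi> y))^2 + 2 * \<alpha>^2 * (cmod (d\<phi> y))^2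
                                + \<alpha>^4 * (cmod (\<phi> y))^2)
           \<le> (SUP y\<in>{y1..y2}. \<bar>K y\<bar>) * integral {y1..y2} (\<lambda>y. K y * (cmod (\<phi> y))^2))"
  proof -
  let ?I = "{y1..y2}"
  have C3: "C3_on y1 y2 U U1 U2 U3" and nc: "\<not> (\<exists>a. \<forall>y\<in>?I. U y = a)"
    using UK unfolding class_Kplus_def by auto
  have dU: "\<And>y. y\<in>?I \<Longrightarrow> (U has_real_derivative U1 y) (at y within ?I)"
    and dU1: "\<And>y. y\<in>?I \<Longrightarrow> (U1 has_real_derivative U2 y) (at y within ?I)"
    and dU2: "\<And>y. y\<in>?I \<Longrightarrow> (U2 has_real_derivative U3 y) (at y within ?I)"
    using C3 unfolding C3_on_def by auto
  have contU: "continuous_on ?I U"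
    using dU by (meson DERIV_continuous continuous_on_eq_continuous_within)
  have contU2: "continuous_on ?I U2"
    using dU2 by (meson DERIV_continuous continuous_on_eq_continuous_within)
  have Kpos: "\<And>y. y\<in>?I \<Longrightarrow> K y > 0"
    and Krel: "\<And>y. y\<in>?I \<Longrightarrow> K y * (U y - U\<beta>) = \<beta> - U2 y"
    and Kb: "bounded (K ` ?I)"
    using K unfolding is_K_def by auto
  obtain B where B: "\<And>y. y\<in>?I \<Longrightarrow> \<bar>K y\<bar> \<le> B"
    using Kb unfolding bounded_iff by (metis image_eqI real_norm_def)
  have B0: "B \<ge> 0" using B[of y1] y12 by auto
  define Z where "Z = {y\<in>?I. U y = U\<beta>}"
  have Zfin: "finite Z"
  proof (rule ccontr)
    assume inf: "infinite Z"
    have "compact ?I" by simp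
    then obtain p where p: "p\<in>?I" "p islimpt Z"
      using Heine_Borel_imp_Bolzano_Weierstrass[OF _ inf] unfolding Z_def by blast
    have "closed Z" unfolding Z_def
      by (rule continuous_closed_preimage_constant[OF contU]) simp
    then have "p \<in> Z" using p(2) closed_limpt by blast
    then have Up: "U p = U\<beta>" unfolding Z_def by simp
    have Zeq: "Z = {z\<in>?I. U z = U p}" unfolding Z_def Up ..
    have U1p: "U1 p = 0"
      by (rule deriv_zero_limpt[OF dU[OF p(1)]]) (use p(2) Zeq in simp)
    have lp1: "p islimpt {z\<in>?I. U1 z = U1 p}"
      unfolding islimpt_approachable
    proof (intro allI impI)
      fix e :: real assume e: "e > 0"
      from p(2) e obtain z where z: "z\<in>Z" "z\<noteq>p" "dist z p < e"
        unfolding islimpt_approachable by blast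
      define a where "a = min z p"
      define b where "b = max z p"
      have ab: "a < b" using z(2) unfolding a_def b_def by auto
      have abI: "a \<in> ?I" "b \<in> ?I" using z(1) p(1) unfolding a_def b_def Z_def by auto
      have Uab: "U a = U b" using z(1) Up unfolding a_def b_def Z_def by (auto simp: min_def max_def)
      have sub: "{a..b} \<subseteq> ?I" using abI by auto
      obtain \<xi> where xi: "a < \<xi>" "\<xi> < b" "(U has_real_derivative 0) (at \<xi>)"
      proof -
        have "\<exists>z>a. z < b \<and> (U has_real_derivative 0) (at z)"
        proof (rule Rolle[OF ab Uab])
          show "continuous_on {a..b} U" by (rule continuous_on_subset[OF contU sub])
          fix x assume x: "a < x" "x < b"
          then have "y1 < x" "x < y2" using abI by auto
          then have "(U has_real_derivative U1 x) (at x)"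
            using dU[of x] at_within_Icc_at[of y1 x y2] by auto
          then show "U differentiable at x" using real_differentiable_def by blast
        qed
        then show ?thesis using that by blast
      qed
      have xi2: "y1 < \<xi>" "\<xi> < y2" using xi abI by auto
      have "(U has_real_derivative U1 \<xi>) (at \<xi>)"
        using dU[of \<xi>] xi2 at_within_Icc_at[of y1 \<xi> y2] by auto
      then have "U1 \<xi> = 0" using xi(3) DERIV_unique by blast
      moreover have "\<xi> \<noteq> p" "dist \<xi> p < e" using xi z(3) unfolding a_def b_def dist_real_def
        by (auto simp: min_def max_def split: if_splits)
      ultimately show "\<exists>x'\<in>{z\<in>?I. U1 z = U1 p}. x' \<noteq> p \<and> dist x' p < e"
        using xi2 U1p by (intro bexI[of _ \<xi>]) auto
    qed
    have "U2 p = 0" by (rule deriv_zero_limpt[OF dU1[OF p(1)] lp1])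
    then have \<beta>0: "\<beta> = 0" using Krel[OF p(1)] Up by simp
    have d1: "((\<lambda>y. U y - U\<beta>) has_real_derivative U1 t) (at t within ?I)" if t: "t \<in> ?I" for t
      using dU[OF t] by (auto intro!: derivative_eq_intros)
    have bd: "\<bar>U2 t\<bar> \<le> B * \<bar>U t - U\<beta>\<bar>" if t: "t \<in> ?I" for t
    proof -
      have "\<bar>U2 t\<bar> = \<bar>K t\<bar> * \<bar>U t - U\<beta>\<bar>" using Krel[OF t] \<beta>0 by (metis abs_minus_cancel abs_mult add_0 diff_conv_add_uminus)
      also have "\<dots> \<le> B * \<bar>U t - U\<beta>\<bar>" using B[OF t] by (simp add: mult_right_mono)
      finally show ?thesis .
    qed
    have "U y - U\<beta> = 0" if y: "y \<in> ?I" for y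
      using energy_zero[where f="\<lambda>y. U y - U\<beta>" and fa=U1 and fb=U2 and M=B and p=p and a=y1 and b=y2,
          OF d1 dU1 bd B0 p(1) _ U1p y] Up by simp
    then show False using nc by auto
  qed
  have Kint: "(\<lambda>y. K y * w y) integrable_on ?I" if w: "continuous_on ?I w" for w :: "real \<Rightarrow> real"
  proof -
    have "compact (w ` ?I)" by (rule compact_continuous_image[OF w]) simp
    then have "bounded (w ` ?I)" by (rule compact_imp_bounded)
    then obtain Mw where Mw: "\<And>y. y \<in> ?I \<Longrightarrow> \<bar>w y\<bar> \<le> Mw"
      unfolding bounded_iff by (metis image_eqI real_norm_def)
    show ?thesis
    proof (rule integrable_off_finite[OF Zfin, where G="\<lambda>y. (\<beta> - U2 y) / (U y - U\<beta>) * w y" and C="B * Mw"])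
      fix y assume y: "y \<in> ?I - Z"
      then have "U y - U\<beta> \<noteq> 0" unfolding Z_def by auto
      then have "K y = (\<beta> - U2 y) / (U y - U\<beta>)"
        using Krel[of y] y by (simp add: eq_divide_eq)
      then show "K y * w y = (\<beta> - U2 y) / (U y - U\<beta>) * w y" by simp
    next
      show "continuous_on (?I - Z) (\<lambda>y. (\<beta> - U2 y) / (U y - U\<beta>) * w y)"
        by (intro continuous_intros continuous_on_subset[OF contU2] continuous_on_subset[OF contU]
            continuous_on_subset[OF w]) (auto simp: Z_def)
    next
      fix y assume y: "y \<in> ?I"
      have "\<bar>K y * w y\<bar> = \<bar>K y\<bar> * \<bar>w y\<bar>" by (simp add: abs_mult)
      also have "\<dots> \<le> B * Mw" by (rule mult_mono) (use B[OF y] Mw[OF y] B0 in auto)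
      finally show "\<bar>K y * w y\<bar> \<le> B * Mw" .
    qed
  qed
  define q where "q y = complex_of_real (\<alpha>^2) - complex_of_real (\<beta> - U2 y) / (complex_of_real (U y) - c)" for y
  define g where "g y = q y * \<phi> y" for y
  have Uc: "complex_of_real (U y) - c \<noteq> 0" for y
  proof
    assume "complex_of_real (U y) - c = 0"
    then have "Im (complex_of_real (U y) - c) = 0" by simp
    then show False using ci by simp
  qed
  have contg: "continuous_on ?I g"
    unfolding g_def q_def
    by (intro continuous_intros contU contU2 \<phi>_cont continuous_on_of_real) (use Uc in auto)
  have ddg: "dd\<phi> y = g y" if y: "y \<in> {y1<..<y2}" for y
    using eq[OF y] unfolding g_def q_def by (simp add: algebra_simps)
  define m where "m = (y1 + y2) / 2"
  have mI: "m \<in> {y1<..<y2}" using y12 unfolding m_def by auto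
  define D where "D y = d\<phi> m + (integral {y1..y} g - integral {y1..m} g)" for y
  have dD: "(D has_vector_derivative g y) (at y within ?I)" if y: "y \<in> ?I" for y
    unfolding D_def using integral_has_vector_derivative[OF contg y]
    by (auto intro!: derivative_eq_intros)
  have contD: "continuous_on ?I D"
    using dD by (meson has_vector_derivative_continuous continuous_on_eq_continuous_within)
  have dDat: "(D has_vector_derivative g y) (at y)" if y: "y \<in> {y1<..<y2}" for y
    using dD[of y] y at_within_Icc_at[of y1 y y2] by auto
  have Dd: "d\<phi> y = D y" if y: "y \<in> {y1<..<y2}" for y
  proof -
    have "\<exists>k. \<forall>x\<in>{y1<..<y2}. d\<phi> x - D x = k"
    proof (rule has_derivative_zero_constant)
      fix x assume x: "x \<in> {y1<..<y2}"
      have "((\<lambda>x. d\<phi> x - D x) has_vector_derivative (dd\<phi> x - g x)) (at x)"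
        using dd\<phi>[OF x] dDat[OF x] by (rule has_vector_derivative_diff)
      then have "((\<lambda>x. d\<phi> x - D x) has_vector_derivative 0) (at x within {y1<..<y2})"
        using ddg[OF x] by (simp add: has_vector_derivative_at_within)
      then show "((\<lambda>x. d\<phi> x - D x) has_derivative (\<lambda>h. 0)) (at x within {y1<..<y2})"
        by (simp add: has_vector_derivative_def)
    qed simp
    then obtain k where k: "\<And>x. x \<in> {y1<..<y2} \<Longrightarrow> d\<phi> x - D x = k" by blast
    have "D m = d\<phi> m" unfolding D_def by simp
    then have "k = 0" using k[OF mI] by simp
    then show ?thesis using k[OF y] by simp
  qed
  have FTC: "((\<lambda>y. D y * cnj (D y) + g y * cnj (\<phi> y)) has_integral
      (D y2 * cnj (\<phi> y2) - D y1 * cnj (\<phi> y1))) ?I"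
  proof (rule fundamental_theorem_of_calculus_interior)
    show "y1 \<le> y2" using y12 by simp
    show "continuous_on ?I (\<lambda>y. D y * cnj (\<phi> y))"
      by (intro continuous_intros contD \<phi>_cont)
    fix x assume x: "x \<in> {y1<..<y2}"
    have "((\<lambda>y. D y * cnj (\<phi> y)) has_vector_derivative D x * cnj (d\<phi> x) + g x * cnj (\<phi> x)) (at x)"
      by (rule has_vector_derivative_mult[OF dDat[OF x] has_vector_derivative_cnj[OF d\<phi>[OF x]]])
    then show "((\<lambda>y. D y * cnj (\<phi> y)) has_vector_derivative D x * cnj (D x) + g x * cnj (\<phi> x)) (at x)"
      using Dd[OF x] by simp
  qed
  then have FTC0: "((\<lambda>y. D y * cnj (D y) + g y * cnj (\<phi> y)) has_integral 0) ?I"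
    using bc by simp
  define A where "A y = (cmod (\<phi> y))^2" for y
  define Dn where "Dn y = (cmod (D y))^2" for y
  define den where "den y = (U y - Re c)^2 + (Im c)^2" for y
  define h where "h y = \<beta> - U2 y" for y
  define P0 where "P0 y = h y * (U y - Re c) / den y" for y
  have den_pos: "den y > 0" for y unfolding den_def using ci by (simp add: add_nonneg_pos)
  have Req: "Re (q y) = \<alpha>^2 - P0 y" for y
    unfolding q_def P0_def h_def den_def by (simp add: Re_divide)
  have Imq: "Im (q y) = - (h y * Im c / den y)" for y
    unfolding q_def h_def den_def by (simp add: Im_divide)
  have gphi: "g y * cnj (\<phi> y) = q y * complex_of_real (A y)" for y
    unfolding g_def A_def by (simp only: complex_norm_square mult.assoc)
  have DD: "D y * cnj (D y) = complex_of_real (Dn y)" for y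
    unfolding Dn_def by (simp only: complex_norm_square)
  have ReI: "Re (D y * cnj (D y) + g y * cnj (\<phi> y)) = Dn y + \<alpha>^2 * A y - P0 y * A y" for y
    unfolding gphi DD using Req[of y] by (simp add: algebra_simps) (metis distrib_left)
  have ImI: "Im (D y * cnj (D y) + g y * cnj (\<phi> y)) = - (h y * Im c / den y) * A y" for y
    unfolding gphi DD using Imq[of y] by simp
  have R1: "((\<lambda>y. Dn y + \<alpha>^2 * A y - P0 y * A y) has_integral 0) ?I"
    using has_integral_Re[OF FTC0] unfolding ReI by simp
  have R2': "((\<lambda>y. - (h y * Im c / den y) * A y) has_integral 0) ?I"
    using has_integral_Im[OF FTC0] unfolding ImI by simp
  have R2: "((\<lambda>y. h y * A y / den y) has_integral 0) ?I"
  proof -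
    have "((\<lambda>y. (- 1 / Im c) * (- (h y * Im c / den y) * A y)) has_integral 0) ?I"
      using has_integral_mult_right[OF R2', of "- 1 / Im c"] by simp
    moreover have "(\<lambda>y. (- 1 / Im c) * (- (h y * Im c / den y) * A y)) = (\<lambda>y. h y * A y / den y)"
      using ci by (intro ext) (simp add: field_simps)
    ultimately show ?thesis by (simp only:)
  qed
  define e where "e = Re c - U\<beta>"
  define S where "S = (SUP y\<in>?I. \<bar>K y\<bar>)"
  have bddK: "bdd_above ((\<lambda>y. \<bar>K y\<bar>) ` ?I)" using B by (intro bdd_aboveI2[where M=B]) auto
  have KS: "K y \<le> S" if y: "y \<in> ?I" for y
  proof -
    have "\<bar>K y\<bar> \<le> S" unfolding S_def by (rule cSUP_upper[OF y bddK])
    then show ?thesis by simp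
  qed
  have S0: "S \<ge> 0" using KS[of y1] Kpos[of y1] y12 by auto
  have contA: "continuous_on ?I A" unfolding A_def by (intro continuous_intros \<phi>_cont)
  have contDn: "continuous_on ?I Dn" unfolding Dn_def by (intro continuous_intros contD)
  have contden: "continuous_on ?I den" unfolding den_def by (intro continuous_intros contU)
  have denne: "den y \<noteq> 0" for y using den_pos[of y] by simp
  have conth: "continuous_on ?I h" unfolding h_def by (intro continuous_intros contU2)
  have contAd: "continuous_on ?I (\<lambda>y. A y / den y)"
    by (intro continuous_intros contA contden) (use denne in auto)
  have contP: "continuous_on ?I (\<lambda>y. P0 y * A y)" unfolding P0_def
    by (intro continuous_intros contA contden conth contU) (use denne in auto)
  have contW: "continuous_on ?I (\<lambda>y. h y * (U y - U\<beta>) * A y / den y)"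
    by (intro continuous_intros contA contden conth contU) (use denne in auto)
  have contH: "continuous_on ?I (\<lambda>y. (h y)^2 / den y * A y)"
    by (intro continuous_intros contA contden conth) (use denne in auto)
  have hK: "h y = K y * (U y - U\<beta>)" if "y \<in> ?I" for y using Krel[OF that] unfolding h_def by simp
  define IP where "IP = integral ?I (\<lambda>y. P0 y * A y)"
  define IKA where "IKA = integral ?I (\<lambda>y. K y * A y)"
  define IKd where "IKd = integral ?I (\<lambda>y. K y * (A y / den y))"
  define W where "W = integral ?I (\<lambda>y. h y * (U y - U\<beta>) * A y / den y)"
  define IH where "IH = integral ?I (\<lambda>y. (h y)^2 / den y * A y)"
  have hP: "((\<lambda>y. P0 y * A y) has_integral IP) ?I"
    unfolding IP_def by (rule integrable_integral[OF integrable_continuous_interval[OF contP]])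
  have hW: "((\<lambda>y. h y * (U y - U\<beta>) * A y / den y) has_integral W) ?I"
    unfolding W_def by (rule integrable_integral[OF integrable_continuous_interval[OF contW]])
  have hH: "((\<lambda>y. (h y)^2 / den y * A y) has_integral IH) ?I"
    unfolding IH_def by (rule integrable_integral[OF integrable_continuous_interval[OF contH]])
  have hKA: "((\<lambda>y. K y * A y) has_integral IKA) ?I"
    unfolding IKA_def by (rule integrable_integral[OF Kint[OF contA]])
  have hKd: "((\<lambda>y. K y * (A y / den y)) has_integral IKd) ?I"
    unfolding IKd_def by (rule integrable_integral[OF Kint[OF contAd]])
  have IKd0: "IKd \<ge> 0"
  proof (rule has_integral_nonneg[OF hKd])
    fix y assume y: "y \<in> ?I"
    show "0 \<le> K y * (A y / den y)" using Kpos[OF y] den_pos[of y] unfolding A_def by simp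
  qed
  have id1: "K y * A y = P0 y * A y + (e^2 + (Im c)^2) * (K y * (A y / den y)) - e * (h y * A y / den y)"
    if y: "y \<in> ?I" for y
    using aux1[where k="K y" and a="A y" and u="U y" and ub=U\<beta> and rc="Re c" and ci="Im c", OF den_def[of y] denne[of y]]
    unfolding P0_def hK[OF y] e_def .
  have id2: "K y * A y = h y * (U y - U\<beta>) * A y / den y + (e^2 + (Im c)^2) * (K y * (A y / den y)) - 2 * e * (h y * A y / den y)"
    if y: "y \<in> ?I" for y
    using aux2[where k="K y" and a="A y" and u="U y" and ub=U\<beta> and rc="Re c" and ci="Im c", OF den_def[of y] denne[of y]]
    unfolding hK[OF y] e_def .
  have e1: "IKA = IP + (e^2 + (Im c)^2) * IKd"
  proof -
    have "((\<lambda>y. P0 y * A y + (e^2 + (Im c)^2) * (K y * (A y / den y)) - e * (h y * A y / den y))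
        has_integral (IP + (e^2 + (Im c)^2) * IKd - e * 0)) ?I"
      by (intro has_integral_diff has_integral_add has_integral_mult_right hP hKd R2)
    then have "((\<lambda>y. K y * A y) has_integral (IP + (e^2 + (Im c)^2) * IKd)) ?I"
      unfolding mult_zero_right diff_zero by (rule has_integral_eq[rotated]) (use id1 in simp)
    then show ?thesis using hKA by (rule has_integral_unique[rotated])
  qed
  have e2: "IKA = W + (e^2 + (Im c)^2) * IKd"
  proof -
    have "((\<lambda>y. h y * (U y - U\<beta>) * A y / den y + (e^2 + (Im c)^2) * (K y * (A y / den y)) - 2 * e * (h y * A y / den y))
        has_integral (W + (e^2 + (Im c)^2) * IKd - 2 * e * 0)) ?I"
      by (intro has_integral_diff has_integral_add has_integral_mult_right hW hKd R2)
    then have "((\<lambda>y. K y * A y) has_integral (W + (e^2 + (Im c)^2) * IKd)) ?I"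
      unfolding mult_zero_right diff_zero by (rule has_integral_eq[rotated]) (use id2 in simp)
    then show ?thesis using hKA by (rule has_integral_unique[rotated])
  qed
  have negl: "negligible {y1, y2}" by simp
  have L1: "integral ?I (\<lambda>y. (cmod (d\<phi> y))^2 + \<alpha>^2 * (cmod (\<phi> y))^2) = IP"
  proof -
    have "((\<lambda>y. (Dn y + \<alpha>^2 * A y - P0 y * A y) + P0 y * A y) has_integral (0 + IP)) ?I"
      by (rule has_integral_add[OF R1 hP])
    then have "((\<lambda>y. (cmod (d\<phi> y))^2 + \<alpha>^2 * (cmod (\<phi> y))^2) has_integral IP) ?I"
      unfolding add_0_left by (rule has_integral_spike[OF negl, rotated]) (auto simp: Dd Dn_def A_def)
    then show ?thesis by (rule integral_unique)
  qed
  have L2: "integral ?I (\<lambda>y. (cmod (dd\<phi> y))^2 + 2 * \<alpha>^2 * (cmod (d\<phi> y))^2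
                                + \<alpha>^4 * (cmod (\<phi> y))^2) = IH"
  proof -
    have "((\<lambda>y. (h y)^2 / den y * A y + 2 * \<alpha>^2 * (Dn y + \<alpha>^2 * A y - P0 y * A y)) has_integral (IH + 2 * \<alpha>^2 * 0)) ?I"
      by (intro has_integral_add has_integral_mult_right hH R1)
    then have "((\<lambda>y. (cmod (dd\<phi> y))^2 + 2 * \<alpha>^2 * (cmod (d\<phi> y))^2
                                + \<alpha>^4 * (cmod (\<phi> y))^2) has_integral IH) ?I"
      unfolding mult_zero_right add_0_right
    proof (rule has_integral_spike[OF negl, rotated])
      fix y assume y: "y \<in> ?I - {y1, y2}"
      then have yo: "y \<in> {y1<..<y2}" by auto
      have c1: "(cmod (dd\<phi> y))^2 = ((Re (q y))^2 + (Im (q y))^2) * A y"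
        unfolding ddg[OF yo] g_def A_def norm_mult power_mult_distrib cmod_power2 ..
      have c2: "(Re (q y))^2 + (Im (q y))^2 = (\<alpha>^2 - P0 y)^2 + (h y * Im c / den y)^2"
        unfolding Req Imq by simp
      have c3: "(P0 y)^2 + (h y * Im c / den y)^2 = (h y)^2 / den y"
        unfolding P0_def by (rule aux3[OF den_def[of y] denne[of y]])
      show "(cmod (dd\<phi> y))^2 + 2 * \<alpha>^2 * (cmod (d\<phi> y))^2 + \<alpha>^4 * (cmod (\<phi> y))^2
          = (h y)^2 / den y * A y + 2 * \<alpha>^2 * (Dn y + \<alpha>^2 * A y - P0 y * A y)"
        unfolding c1 c2 Dd[OF yo] Dn_def[symmetric] A_def[symmetric] by (rule aux4[OF c3])
    qed
    then show ?thesis by (rule integral_unique)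
  qed
  have Wle: "W \<le> IKA" using e2 IKd0 by (simp add: add_nonneg_nonneg)
  have IHle: "IH \<le> S * W"
  proof (rule has_integral_le[OF hH has_integral_mult_right[OF hW]])
    fix y assume y: "y \<in> ?I"
    have nn: "0 \<le> (U y - U\<beta>)^2 * A y / den y" using den_pos[of y] unfolding A_def by simp
    have "K y * K y \<le> S * K y" using KS[OF y] Kpos[OF y] by (simp add: mult_right_mono)
    then have "K y * K y * ((U y - U\<beta>)^2 * A y / den y) \<le> S * K y * ((U y - U\<beta>)^2 * A y / den y)"
      by (rule mult_right_mono[OF _ nn])
    then show "(h y)^2 / den y * A y \<le> S * (h y * (U y - U\<beta>) * A y / den y)"
      unfolding hK[OF y] by (simp add: power2_eq_square algebra_simps)
  qed
  show ?thesis
  proof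
    show "integral ?I (\<lambda>y. (cmod (d\<phi> y))^2 + \<alpha>^2 * (cmod (\<phi> y))^2)
           \<le> integral ?I (\<lambda>y. K y * (cmod (\<phi> y))^2)"
      unfolding L1 using e1 IKd0 unfolding IKA_def A_def by (simp add: add_nonneg_nonneg)
    have "IH \<le> S * IKA" using IHle mult_left_mono[OF Wle S0] by linarith
    then show "integral ?I (\<lambda>y. (cmod (dd\<phi> y))^2 + 2 * \<alpha>^2 * (cmod (d\<phi> y))^2
                                + \<alpha>^4 * (cmod (\<phi> y))^2)
           \<le> (SUP y\<in>?I. \<bar>K y\<bar>) * integral ?I (\<lambda>y. K y * (cmod (\<phi> y))^2)"
      unfolding L2 S_def[symmetric] IKA_def A_def .
  qed
qed

end
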